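(* In the setting below, let $i_1,\dots,i_m\in I$ and set $i_r':=(g_{i_1}g_{i_2}\cdots g_{i_{r-1}})(i_r)\in S$ for $1\le r\le m$. (1) If $i_r'=i_{r+1}'$ for some $r$, then there are $j_1,\dots,j_{m-2}\in I$ with $l_{j_1}\cdots l_{j_{m-2}}=l_{i_1}\cdots l_{i_m}$ in $L$ such that $j_k'=i_k'$ for $1\le k\le r-1$ and $j_k'=i_{k+2}'$ for $r\le k\le m-2$ (where $j_k'$ is defined from $j_1,\dots,j_k$ in the same way). (2) If $i_r'$ and $i_{r+1}'$ commute in $W$, then there are $j_1,\dots,j_m\in I$ with $l_{j_1}\cdots l_{j_m}=l_{i_1}\cdots l_{i_m}$ in $L$ such that $j_k'=i_k'$ for $k\ne r,r+1$, $j_r'=i_{r+1}'$ and $j_{r+1}'=i_r'$.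
   Context: Setting: $(W,S)$ is a right-angled Coxeter system (all off-diagonal Coxeter matrix entries in $\{2,\infty\}$), $G$ is a subgroup of $\mathrm{Aut}(W,S)$ (automorphisms of $W$ mapping $S$ bijectively to $S$), $I\subset S$, and $\{g_i\}_{i\in I}$ is a family of involutions in $G$ such that: (i) $g_i(s)\in S$ for all $i\in I$, $s\in S$; (ii) for all $i,j\in I$ with $ij=ji$, either [$g_i(j)\in I$, $g_j(i)=i$ and $g_{g_i(j)}=g_ig_jg_i$] or [$g_j(i)\in I$, $g_i(j)=j$ and $g_{g_j(i)}=g_jg_ig_j$]; (iii) $g_i(i)=i$ for all $i\in I$. $L$ is the group generated by symbols $l_i$, $i\in I$, subject to $l_i^2=1$ for all $i$, and $l_il_j=l_{g_i(j)}l_i$ whenever $ij=ji$, $g_j(i)=i$, $g_i(j)\in I$ and $g_{g_i(j)}=g_ig_jg_i$. *)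

theory Defs
  imports Main "HOL-Library.Extended_Nat"
begin

text \<open>Congruence closure on words generated by a set of defining relations:
  two words are equal in the presented monoid iff they are related.\<close>
definition rewrite_step :: "('a list \<times> 'a list) set \<Rightarrow> 'a list \<Rightarrow> 'a list \<Rightarrow> bool" where
  "rewrite_step R w w' \<longleftrightarrow> (\<exists>xs ys u v. (u, v) \<in> R \<and> w = xs @ u @ ys \<and> w' = xs @ v @ ys)"

definition pres_eq :: "('a list \<times> 'a list) set \<Rightarrow> 'a list \<Rightarrow> 'a list \<Rightarrow> bool" where
  "pres_eq R = equivclp (rewrite_step R)"

text \<open>Coxeter matrix on the generating set S (= the type 'a).\<close>
definition coxeter_matrix :: "('a \<Rightarrow> 'a \<Rightarrow> enat) \<Rightarrow> bool" where
  "coxeter_matrix M \<longleftrightarrow> (\<forall>s. M s s = 1) \<and> (\<forall>s t. M s t = M t s)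
      \<and> (\<forall>s t. s \<noteq> t \<longrightarrow> M s t \<ge> 2)"

definition right_angled :: "('a \<Rightarrow> 'a \<Rightarrow> enat) \<Rightarrow> bool" where
  "right_angled M \<longleftrightarrow> coxeter_matrix M \<and> (\<forall>s t. s \<noteq> t \<longrightarrow> M s t = 2 \<or> M s t = \<infinity>)"

definition coxeter_rels :: "('a \<Rightarrow> 'a \<Rightarrow> enat) \<Rightarrow> ('a list \<times> 'a list) set" where
  "coxeter_rels M = {(concat (replicate k [s, t]), []) | s t k. M s t = enat k}"

definition W_eq :: "('a \<Rightarrow> 'a \<Rightarrow> enat) \<Rightarrow> 'a list \<Rightarrow> 'a list \<Rightarrow> bool" where
  "W_eq M = pres_eq (coxeter_rels M)"

text \<open>Aut(W,S): automorphisms of W permuting S, represented by their restriction to S.\<close>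
definition AutWS :: "('a \<Rightarrow> 'a \<Rightarrow> enat) \<Rightarrow> ('a \<Rightarrow> 'a) set" where
  "AutWS M = {\<sigma>. bij \<sigma> \<and> (\<forall>u v. W_eq M u v \<longleftrightarrow> W_eq M (map \<sigma> u) (map \<sigma> v))}"

definition subgroup_of_Aut :: "('a \<Rightarrow> 'a \<Rightarrow> enat) \<Rightarrow> ('a \<Rightarrow> 'a) set \<Rightarrow> bool" where
  "subgroup_of_Aut M G \<longleftrightarrow> G \<subseteq> AutWS M \<and> id \<in> G
      \<and> (\<forall>f\<in>G. \<forall>h\<in>G. f \<circ> h \<in> G) \<and> (\<forall>f\<in>G. inv f \<in> G)"

text \<open>Defining relations of L (generators l_i, i in I, represented by i).\<close>
definition L_rels :: "('a \<Rightarrow> 'a \<Rightarrow> enat) \<Rightarrow> 'a set \<Rightarrow> ('a \<Rightarrow> 'a \<Rightarrow> 'a) \<Rightarrow> ('a list \<times> 'a list) set" where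
  "L_rels M I g = {([i, i], []) | i. i \<in> I}
     \<union> {([i, j], [g i j, i]) | i j. i \<in> I \<and> j \<in> I \<and> W_eq M [i, j] [j, i]
            \<and> g j i = i \<and> g i j \<in> I \<and> g (g i j) = g i \<circ> g j \<circ> g i}"

definition L_eq :: "('a \<Rightarrow> 'a \<Rightarrow> enat) \<Rightarrow> 'a set \<Rightarrow> ('a \<Rightarrow> 'a \<Rightarrow> 'a) \<Rightarrow> 'a list \<Rightarrow> 'a list \<Rightarrow> bool" where
  "L_eq M I g = pres_eq (L_rels M I g)"

definition gprod :: "('a \<Rightarrow> 'a \<Rightarrow> 'a) \<Rightarrow> 'a list \<Rightarrow> 'a \<Rightarrow> 'a" where
  "gprod g xs = foldr (\<lambda>i f. g i \<circ> f) xs id"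

text \<open>The list i_1', ..., i_m' with i_r' = (g_{i_1} ... g_{i_{r-1}})(i_r) (0-indexed).\<close>
definition primes :: "('a \<Rightarrow> 'a \<Rightarrow> 'a) \<Rightarrow> 'a list \<Rightarrow> 'a list" where
  "primes g xs = map (\<lambda>k. gprod g (take k xs) (xs ! k)) [0..<length xs]"

end

theory Submission
  imports Defs
begin

lemma gprod_Nil[simp]: "gprod g [] = id" by (simp add: gprod_def)
lemma gprod_Cons[simp]: "gprod g (x#xs) = g x \<circ> gprod g xs" by (simp add: gprod_def)

lemma length_primes[simp]: "length (primes g xs) = length xs"
  by (simp add: primes_def)

lemma primes_Nil[simp]: "primes g [] = []" by (simp add: primes_def)

lemma primes_Cons[simp]: "primes g (x#xs) = x # map (g x) (primes g xs)"
proof -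
  have "[0..<length (x#xs)] = 0 # map Suc [0..<length xs]"
    by (simp only: length_Cons upt_conv_Cons[OF zero_less_Suc] map_Suc_upt)
  then show ?thesis by (simp add: primes_def)
qed

lemma primes_append[simp]:
  "primes g (xs @ ys) = primes g xs @ map (gprod g xs) (primes g ys)"
  by (induction xs) auto

lemma pres_step: "(u, v) \<in> R \<Longrightarrow> pres_eq R (xs @ u @ ys) (xs @ v @ ys)"
  unfolding pres_eq_def rewrite_step_def by (rule r_into_equivclp) blast

lemma pres_sym: "pres_eq R x y \<Longrightarrow> pres_eq R y x"
  unfolding pres_eq_def by (rule equivclp_sym)

lemma pres_trans: "pres_eq R x y \<Longrightarrow> pres_eq R y z \<Longrightarrow> pres_eq R x z"
  unfolding pres_eq_def by (rule equivclp_trans)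

lemma gprod_in_G:
  assumes subG: "subgroup_of_Aut M G" and gG: "\<forall>i\<in>I. g i \<in> G"
  shows "set xs \<subseteq> I \<Longrightarrow> gprod g xs \<in> G"
  using subG gG by (induction xs) (auto simp: subgroup_of_Aut_def)

lemma main:
  fixes M :: "'a \<Rightarrow> 'a \<Rightarrow> enat" and G :: "('a \<Rightarrow> 'a) set"
    and I :: "'a set" and g :: "'a \<Rightarrow> 'a \<Rightarrow> 'a"
  assumes subG: "subgroup_of_Aut M G"
    and gG: "\<forall>i\<in>I. g i \<in> G"
    and invol: "\<forall>i\<in>I. g i \<circ> g i = id"
    and cond_ii: "\<forall>i\<in>I. \<forall>j\<in>I. W_eq M [i, j] [j, i] \<longrightarrow>
        (g i j \<in> I \<and> g j i = i \<and> g (g i j) = g i \<circ> g j \<circ> g i) \<or>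
        (g j i \<in> I \<and> g i j = j \<and> g (g j i) = g j \<circ> g i \<circ> g j)"
    and cond_iii: "\<forall>i\<in>I. g i i = i"
    and sub: "set p \<subseteq> I" "a \<in> I" "b \<in> I" "set q \<subseteq> I"
  defines "H \<equiv> gprod g p"
  shows "(H a = H (g a b) \<longrightarrow>
         (\<exists>js. set js \<subseteq> I \<and> length js = length p + length q \<and> L_eq M I g js (p @ a # b # q) \<and>
               primes g js = primes g p @ map (H \<circ> g a \<circ> g b) (primes g q)))
    \<and> (W_eq M [H a, H (g a b)] [H (g a b), H a] \<longrightarrow>
         (\<exists>js. set js \<subseteq> I \<and> length js = Suc (Suc (length p + length q)) \<and> L_eq M I g js (p @ a # b # q) \<and>
               primes g js = primes g p @ [H (g a b), H a] @ map (H \<circ> g a \<circ> g b) (primes g q)))"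
proof (intro conjI impI)
  have inv: "\<And>i x. i \<in> I \<Longrightarrow> g i (g i x) = x"
    using invol by (metis comp_apply id_apply)
  have HG: "H \<in> G" unfolding H_def using gprod_in_G[OF subG gG sub(1)] .
  have HA: "H \<in> AutWS M" using HG subG by (auto simp: subgroup_of_Aut_def)
  have aA: "g a \<in> AutWS M" using gG sub subG by (auto simp: subgroup_of_Aut_def)
  {
    assume eq: "H a = H (g a b)"
    have "inj H" using HA by (auto simp: AutWS_def bij_def)
    then have "a = g a b" using eq by (auto dest: injD)
    then have ab: "b = a" using inv[OF sub(2), of b] cond_iii sub(2) by simp
    have gab: "g a \<circ> g b = id" using invol sub ab by simp
    show "\<exists>js. set js \<subseteq> I \<and> length js = length p + length q \<and> L_eq M I g js (p @ a # b # q) \<and>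
               primes g js = primes g p @ map (H \<circ> g a \<circ> g b) (primes g q)"
    proof (intro exI conjI)
      show "set (p @ q) \<subseteq> I" using sub by auto
      show "length (p @ q) = length p + length q" by simp
      have "([a, a], []) \<in> L_rels M I g" using sub by (auto simp: L_rels_def)
      from pres_step[OF this, of p q] show "L_eq M I g (p @ q) (p @ a # b # q)"
        unfolding L_eq_def using ab by (auto intro: pres_sym)
      show "primes g (p @ q) = primes g p @ map (H \<circ> g a \<circ> g b) (primes g q)"
        using gab by (simp add: H_def comp_assoc)
    qed
  }
  {
    assume W: "W_eq M [H a, H (g a b)] [H (g a b), H a]"
    have HW: "\<forall>u v. W_eq M u v = W_eq M (map H u) (map H v)" using HA by (simp add: AutWS_def)
    have W1: "W_eq M [a, g a b] [g a b, a]" using HW[rule_format, of "[a, g a b]" "[g a b, a]"] W by simp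
    have aW: "\<forall>u v. W_eq M u v = W_eq M (map (g a) u) (map (g a) v)" using aA by (simp add: AutWS_def)
    have "W_eq M (map (g a) [a, g a b]) (map (g a) [g a b, a])"
      using aW[rule_format, of "[a, g a b]" "[g a b, a]"] W1 by blast
    then have Wab: "W_eq M [a, b] [b, a]" using inv[OF sub(2)] cond_iii sub(2) by simp
    have Wba: "W_eq M [b, a] [a, b]" using Wab unfolding W_eq_def by (rule pres_sym)
    from cond_ii sub(2,3) Wab have
      "(g a b \<in> I \<and> g b a = a \<and> g (g a b) = g a \<circ> g b \<circ> g a) \<or>
        (g b a \<in> I \<and> g a b = b \<and> g (g b a) = g b \<circ> g a \<circ> g b)" by blast
    then show "\<exists>js. set js \<subseteq> I \<and> length js = Suc (Suc (length p + length q)) \<and> L_eq M I g js (p @ a # b # q) \<and>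
               primes g js = primes g p @ [H (g a b), H a] @ map (H \<circ> g a \<circ> g b) (primes g q)"
    proof
      assume c: "g a b \<in> I \<and> g b a = a \<and> g (g a b) = g a \<circ> g b \<circ> g a"
      define cc where "cc = g a b"
      have c1: "g cc a = a" using c cond_iii sub by (simp add: cc_def)
      have c2: "g cc \<circ> g a = g a \<circ> g b" using c inv[OF sub(2)] by (auto simp: cc_def)
      show ?thesis
      proof (intro exI conjI)
        show "set (p @ cc # a # q) \<subseteq> I" using sub c by (auto simp: cc_def)
        show "length (p @ cc # a # q) = Suc (Suc (length p + length q))" by simp
        have "([a, b], [cc, a]) \<in> L_rels M I g" using sub c Wab by (auto simp: L_rels_def cc_def)
        from pres_step[OF this, of p q] show "L_eq M I g (p @ cc # a # q) (p @ a # b # q)"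
          unfolding L_eq_def by (auto intro: pres_sym)
        have "map (g cc \<circ> g a) (primes g q) = map (g a \<circ> g b) (primes g q)" using c2 by simp
        then show "primes g (p @ cc # a # q) = primes g p @ [H (g a b), H a] @ map (H \<circ> g a \<circ> g b) (primes g q)"
          using c1 by (simp add: H_def cc_def comp_assoc)
      qed
    next
      assume c: "g b a \<in> I \<and> g a b = b \<and> g (g b a) = g b \<circ> g a \<circ> g b"
      define d where "d = g b a"
      have d1: "g b d = a" using inv[OF sub(3)] by (simp add: d_def)
      have d2: "g b \<circ> g d = g a \<circ> g b" using c inv[OF sub(3)] by (auto simp: d_def)
      show ?thesis
      proof (intro exI conjI)
        show "set (p @ b # d # q) \<subseteq> I" using sub c by (auto simp: d_def)
        show "length (p @ b # d # q) = Suc (Suc (length p + length q))" by simp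
        have r1: "([b, a], [d, b]) \<in> L_rels M I g" using sub c Wba by (auto simp: L_rels_def d_def)
        have r2: "([b, b], []) \<in> L_rels M I g" using sub by (auto simp: L_rels_def)
        have s1: "L_eq M I g (p @ b # d # b # b # q) (p @ b # d # q)"
          using pres_step[OF r2, of "p @ [b, d]" q] unfolding L_eq_def by simp
        have s2: "L_eq M I g (p @ b # b # a # b # q) (p @ b # d # b # b # q)"
          using pres_step[OF r1, of "p @ [b]" "b # q"] unfolding L_eq_def by simp
        have s3: "L_eq M I g (p @ b # b # a # b # q) (p @ a # b # q)"
          using pres_step[OF r2, of p "a # b # q"] unfolding L_eq_def by simp
        show "L_eq M I g (p @ b # d # q) (p @ a # b # q)"
          using s1 s2 s3 unfolding L_eq_def by (meson pres_sym pres_trans)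
        have "map (g b \<circ> g d) (primes g q) = map (g a \<circ> g b) (primes g q)" using d2 by simp
        then show "primes g (p @ b # d # q) = primes g p @ [H (g a b), H a] @ map (H \<circ> g a \<circ> g b) (primes g q)"
          using d1 c by (simp add: H_def d_def comp_assoc)
      qed
    qed
  }
qed

theorem lemma2:
  fixes M :: "'a \<Rightarrow> 'a \<Rightarrow> enat" and G :: "('a \<Rightarrow> 'a) set"
    and I :: "'a set" and g :: "'a \<Rightarrow> 'a \<Rightarrow> 'a"
  assumes RA: "right_angled M"
    and subG: "subgroup_of_Aut M G"
    and gG: "\<forall>i\<in>I. g i \<in> G"
    and invol: "\<forall>i\<in>I. g i \<circ> g i = id"
    and cond_ii: "\<forall>i\<in>I. \<forall>j\<in>I. W_eq M [i, j] [j, i] \<longrightarrow>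
        (g i j \<in> I \<and> g j i = i \<and> g (g i j) = g i \<circ> g j \<circ> g i) \<or>
        (g j i \<in> I \<and> g i j = j \<and> g (g j i) = g j \<circ> g i \<circ> g j)"
    and cond_iii: "\<forall>i\<in>I. g i i = i"
  shows "\<forall>is r. set is \<subseteq> I \<and> Suc r < length is \<longrightarrow>
      (primes g is ! r = primes g is ! Suc r \<longrightarrow>
         (\<exists>js. set js \<subseteq> I \<and> length js = length is - 2 \<and> L_eq M I g js is \<and>
               primes g js = take r (primes g is) @ drop (Suc (Suc r)) (primes g is)))
    \<and> (W_eq M [primes g is ! r, primes g is ! Suc r] [primes g is ! Suc r, primes g is ! r] \<longrightarrow>
         (\<exists>js. set js \<subseteq> I \<and> length js = length is \<and> L_eq M I g js is \<and>
               primes g js = take r (primes g is) @ [primes g is ! Suc r, primes g is ! r]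
                              @ drop (Suc (Suc r)) (primes g is)))"
proof (intro allI impI)
  fix "is" r
  assume A: "set is \<subseteq> I \<and> Suc r < length is"
  define p where "p = take r is"
  define a where "a = is ! r"
  define b where "b = is ! Suc r"
  define q where "q = drop (Suc (Suc r)) is"
  have "drop r is = a # b # q" using A
    by (simp add: a_def b_def q_def Cons_nth_drop_Suc)
  then have isd: "is = p @ a # b # q" unfolding p_def by (metis append_take_drop_id)
  have lp: "length p = r" using A by (simp add: p_def)
  have sub: "set p \<subseteq> I" "a \<in> I" "b \<in> I" "set q \<subseteq> I" using A isd by auto
  note m = main[OF subG gG invol cond_ii cond_iii sub]
  show "(primes g is ! r = primes g is ! Suc r \<longrightarrow>
         (\<exists>js. set js \<subseteq> I \<and> length js = length is - 2 \<and> L_eq M I g js is \<and>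
               primes g js = take r (primes g is) @ drop (Suc (Suc r)) (primes g is)))
    \<and> (W_eq M [primes g is ! r, primes g is ! Suc r] [primes g is ! Suc r, primes g is ! r] \<longrightarrow>
         (\<exists>js. set js \<subseteq> I \<and> length js = length is \<and> L_eq M I g js is \<and>
               primes g js = take r (primes g is) @ [primes g is ! Suc r, primes g is ! r]
                              @ drop (Suc (Suc r)) (primes g is)))"
    using m unfolding isd by (simp add: lp[symmetric] nth_append comp_assoc)
qed

end
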